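(* Let $k$ be a field and $\mathsf{E}$ a locally finite $k$-linear category. Then every $\mathsf{E}$-module (left or right) is the direct limit (directed union) of its locally finite $\mathsf{E}$-submodules.
   Context: A small $k$-linear category $\mathsf{E}$ has $k$-vector spaces $\operatorname{Hom}_\mathsf{E}(x,y)$, $k$-bilinear associative composition and identities with $\mathrm{id}_x\ne0$. A left (resp. right) $\mathsf{E}$-module is a $k$-linear functor $\mathsf{E}\to k\text{-Vect}$ (resp. $\mathsf{E}^{op}\to k\text{-Vect}$); it is locally finite if all its values are finite-dimensional. Write $x\preceq y$ if there are $n\ge1$ and objects $x=z_0,\dots,z_n=y$ with $\operatorname{Hom}_\mathsf{E}(z_{i-1},z_i)\neq0$ for all $i$. $\mathsf{E}$ is locally finite if all Hom spaces are finite-dimensional and every $\{z:x\preceq z\preceq y\}$ is finite. *)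

theory Defs
  imports Main "HOL.Vector_Spaces"
begin

text \<open>All Hom spaces
  are subspaces of one ambient k-vector space of type 'm (scalar multiplication sm);
  composition is indexed by the three objects involved: comp x y z g f is
  g composed with f, for f in Hom x y and g in Hom y z.\<close>

definition kcat ::
  "('k::field \<Rightarrow> 'm::ab_group_add \<Rightarrow> 'm) \<Rightarrow> 'o set \<Rightarrow> ('o \<Rightarrow> 'o \<Rightarrow> 'm set)
   \<Rightarrow> ('o \<Rightarrow> 'o \<Rightarrow> 'o \<Rightarrow> 'm \<Rightarrow> 'm \<Rightarrow> 'm) \<Rightarrow> ('o \<Rightarrow> 'm) \<Rightarrow> bool" where
  "kcat sm Ob Hom cmp idm \<longleftrightarrow>
     vector_space sm \<and>
     (\<forall>x\<in>Ob. \<forall>y\<in>Ob. module.subspace sm (Hom x y)) \<and>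
     (\<forall>x\<in>Ob. \<forall>y\<in>Ob. \<forall>z\<in>Ob. \<forall>f\<in>Hom x y. \<forall>g\<in>Hom y z. cmp x y z g f \<in> Hom x z) \<and>
     (\<forall>x\<in>Ob. \<forall>y\<in>Ob. \<forall>z\<in>Ob. \<forall>f\<in>Hom x y. \<forall>f'\<in>Hom x y. \<forall>g\<in>Hom y z. \<forall>g'\<in>Hom y z. \<forall>c.
        cmp x y z (g + g') f = cmp x y z g f + cmp x y z g' f \<and>
        cmp x y z g (f + f') = cmp x y z g f + cmp x y z g f' \<and>
        cmp x y z (sm c g) f = sm c (cmp x y z g f) \<and>
        cmp x y z g (sm c f) = sm c (cmp x y z g f)) \<and>
     (\<forall>w\<in>Ob. \<forall>x\<in>Ob. \<forall>y\<in>Ob. \<forall>z\<in>Ob. \<forall>f\<in>Hom w x. \<forall>g\<in>Hom x y. \<forall>h\<in>Hom y z.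
        cmp w y z h (cmp w x y g f) = cmp w x z (cmp x y z h g) f) \<and>
     (\<forall>x\<in>Ob. idm x \<in> Hom x x \<and> idm x \<noteq> 0) \<and>
     (\<forall>x\<in>Ob. \<forall>y\<in>Ob. \<forall>f\<in>Hom x y. cmp x y y (idm y) f = f \<and> cmp x x y f (idm x) = f)"

definition fin_dim_sub :: "('k::field \<Rightarrow> 'v::ab_group_add \<Rightarrow> 'v) \<Rightarrow> 'v set \<Rightarrow> bool" where
  "fin_dim_sub s S \<longleftrightarrow> (\<exists>B. finite B \<and> B \<subseteq> S \<and> module.span s B = S)"

definition kcat_prec :: "'o set \<Rightarrow> ('o \<Rightarrow> 'o \<Rightarrow> 'm::zero set) \<Rightarrow> ('o \<times> 'o) set" where
  "kcat_prec Ob Hom = {(x, y). x \<in> Ob \<and> y \<in> Ob \<and> Hom x y \<noteq> {0}}\<^sup>+"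

definition locally_finite_kcat ::
  "('k::field \<Rightarrow> 'm::ab_group_add \<Rightarrow> 'm) \<Rightarrow> 'o set \<Rightarrow> ('o \<Rightarrow> 'o \<Rightarrow> 'm set)
   \<Rightarrow> ('o \<Rightarrow> 'o \<Rightarrow> 'o \<Rightarrow> 'm \<Rightarrow> 'm \<Rightarrow> 'm) \<Rightarrow> ('o \<Rightarrow> 'm) \<Rightarrow> bool" where
  "locally_finite_kcat sm Ob Hom cmp idm \<longleftrightarrow>
     kcat sm Ob Hom cmp idm \<and>
     (\<forall>x\<in>Ob. \<forall>y\<in>Ob. fin_dim_sub sm (Hom x y)) \<and>
     (\<forall>x\<in>Ob. \<forall>y\<in>Ob. finite {z. (x, z) \<in> kcat_prec Ob Hom \<and> (z, y) \<in> kcat_prec Ob Hom})"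

text \<open>Left module (covariant k-linear functor E \<rightarrow> k-Vect): values V x are subspaces of an
  ambient k-vector space of type 'v; act x y f maps V x to V y for f in Hom x y.\<close>
definition left_module ::
  "('k::field \<Rightarrow> 'm::ab_group_add \<Rightarrow> 'm) \<Rightarrow> 'o set \<Rightarrow> ('o \<Rightarrow> 'o \<Rightarrow> 'm set)
   \<Rightarrow> ('o \<Rightarrow> 'o \<Rightarrow> 'o \<Rightarrow> 'm \<Rightarrow> 'm \<Rightarrow> 'm) \<Rightarrow> ('o \<Rightarrow> 'm)
   \<Rightarrow> ('k \<Rightarrow> 'v::ab_group_add \<Rightarrow> 'v) \<Rightarrow> ('o \<Rightarrow> 'v set) \<Rightarrow> ('o \<Rightarrow> 'o \<Rightarrow> 'm \<Rightarrow> 'v \<Rightarrow> 'v) \<Rightarrow> bool" where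
  "left_module sm Ob Hom cmp idm sv V act \<longleftrightarrow>
     vector_space sv \<and>
     (\<forall>x\<in>Ob. module.subspace sv (V x)) \<and>
     (\<forall>x\<in>Ob. \<forall>y\<in>Ob. \<forall>f\<in>Hom x y. \<forall>v\<in>V x. act x y f v \<in> V y) \<and>
     (\<forall>x\<in>Ob. \<forall>y\<in>Ob. \<forall>f\<in>Hom x y. \<forall>f'\<in>Hom x y. \<forall>u\<in>V x. \<forall>v\<in>V x. \<forall>c.
        act x y f (u + v) = act x y f u + act x y f v \<and>
        act x y f (sv c v) = sv c (act x y f v) \<and>
        act x y (f + f') v = act x y f v + act x y f' v \<and>
        act x y (sm c f) v = sv c (act x y f v)) \<and>
     (\<forall>x\<in>Ob. \<forall>v\<in>V x. act x x (idm x) v = v) \<and>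
     (\<forall>x\<in>Ob. \<forall>y\<in>Ob. \<forall>z\<in>Ob. \<forall>f\<in>Hom x y. \<forall>g\<in>Hom y z. \<forall>v\<in>V x.
        act x z (cmp x y z g f) v = act y z g (act x y f v))"

definition right_module ::
  "('k::field \<Rightarrow> 'm::ab_group_add \<Rightarrow> 'm) \<Rightarrow> 'o set \<Rightarrow> ('o \<Rightarrow> 'o \<Rightarrow> 'm set)
   \<Rightarrow> ('o \<Rightarrow> 'o \<Rightarrow> 'o \<Rightarrow> 'm \<Rightarrow> 'm \<Rightarrow> 'm) \<Rightarrow> ('o \<Rightarrow> 'm)
   \<Rightarrow> ('k \<Rightarrow> 'v::ab_group_add \<Rightarrow> 'v) \<Rightarrow> ('o \<Rightarrow> 'v set) \<Rightarrow> ('o \<Rightarrow> 'o \<Rightarrow> 'm \<Rightarrow> 'v \<Rightarrow> 'v) \<Rightarrow> bool" where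
  "right_module sm Ob Hom cmp idm sv V act \<longleftrightarrow>
     vector_space sv \<and>
     (\<forall>x\<in>Ob. module.subspace sv (V x)) \<and>
     (\<forall>x\<in>Ob. \<forall>y\<in>Ob. \<forall>f\<in>Hom x y. \<forall>v\<in>V y. act x y f v \<in> V x) \<and>
     (\<forall>x\<in>Ob. \<forall>y\<in>Ob. \<forall>f\<in>Hom x y. \<forall>f'\<in>Hom x y. \<forall>u\<in>V y. \<forall>v\<in>V y. \<forall>c.
        act x y f (u + v) = act x y f u + act x y f v \<and>
        act x y f (sv c v) = sv c (act x y f v) \<and>
        act x y (f + f') v = act x y f v + act x y f' v \<and>
        act x y (sm c f) v = sv c (act x y f v)) \<and>
     (\<forall>x\<in>Ob. \<forall>v\<in>V x. act x x (idm x) v = v) \<and>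
     (\<forall>x\<in>Ob. \<forall>y\<in>Ob. \<forall>z\<in>Ob. \<forall>f\<in>Hom x y. \<forall>g\<in>Hom y z. \<forall>v\<in>V z.
        act x z (cmp x y z g f) v = act x y f (act y z g v))"

definition left_submodule ::
  "'o set \<Rightarrow> ('o \<Rightarrow> 'o \<Rightarrow> 'm set) \<Rightarrow> ('k::field \<Rightarrow> 'v::ab_group_add \<Rightarrow> 'v) \<Rightarrow> ('o \<Rightarrow> 'v set)
   \<Rightarrow> ('o \<Rightarrow> 'o \<Rightarrow> 'm \<Rightarrow> 'v \<Rightarrow> 'v) \<Rightarrow> ('o \<Rightarrow> 'v set) \<Rightarrow> bool" where
  "left_submodule Ob Hom sv V act N \<longleftrightarrow>
     (\<forall>x\<in>Ob. N x \<subseteq> V x \<and> module.subspace sv (N x)) \<and>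
     (\<forall>x\<in>Ob. \<forall>y\<in>Ob. \<forall>f\<in>Hom x y. \<forall>v\<in>N x. act x y f v \<in> N y)"

definition right_submodule ::
  "'o set \<Rightarrow> ('o \<Rightarrow> 'o \<Rightarrow> 'm set) \<Rightarrow> ('k::field \<Rightarrow> 'v::ab_group_add \<Rightarrow> 'v) \<Rightarrow> ('o \<Rightarrow> 'v set)
   \<Rightarrow> ('o \<Rightarrow> 'o \<Rightarrow> 'm \<Rightarrow> 'v \<Rightarrow> 'v) \<Rightarrow> ('o \<Rightarrow> 'v set) \<Rightarrow> bool" where
  "right_submodule Ob Hom sv V act N \<longleftrightarrow>
     (\<forall>x\<in>Ob. N x \<subseteq> V x \<and> module.subspace sv (N x)) \<and>
     (\<forall>x\<in>Ob. \<forall>y\<in>Ob. \<forall>f\<in>Hom x y. \<forall>v\<in>N y. act x y f v \<in> N x)"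

definition locally_finite_mod :: "'o set \<Rightarrow> ('k::field \<Rightarrow> 'v::ab_group_add \<Rightarrow> 'v) \<Rightarrow> ('o \<Rightarrow> 'v set) \<Rightarrow> bool" where
  "locally_finite_mod Ob sv N \<longleftrightarrow> (\<forall>x\<in>Ob. fin_dim_sub sv (N x))"

definition directed_union :: "'o set \<Rightarrow> ('o \<Rightarrow> 'v set) \<Rightarrow> ('o \<Rightarrow> 'v set) set \<Rightarrow> bool" where
  "directed_union Ob V S \<longleftrightarrow>
     S \<noteq> {} \<and>
     (\<forall>N1\<in>S. \<forall>N2\<in>S. \<exists>N3\<in>S. \<forall>x\<in>Ob. N1 x \<subseteq> N3 x \<and> N2 x \<subseteq> N3 x) \<and>
     (\<forall>x\<in>Ob. V x = (\<Union>N\<in>S. N x))"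

end

theory Submission
  imports Defs
begin

lemma fin_image:
  assumes V1: "vector_space s1" and V2: "vector_space s2"
    and HS: "module.subspace s1 H" and HF: "fin_dim_sub s1 H"
    and gadd: "\<forall>a\<in>H. \<forall>b\<in>H. g (a + b) = g a + g b"
    and gsc: "\<forall>a\<in>H. \<forall>c. g (s1 c a) = s2 c (g a)"
  shows "module.subspace s2 (g ` H) \<and> fin_dim_sub s2 (g ` H)"
proof -
  interpret A: vector_space s1 by fact
  interpret B: vector_space s2 by fact
  have h0: "0 \<in> H" using HS A.subspace_0 by blast
  have g0: "g 0 = 0" using gadd h0 by (metis add_0 add_cancel_right_right)
  have sub: "B.subspace (g ` H)"
  proof (rule B.subspaceI)
    show "0 \<in> g ` H" using h0 g0 by (metis image_eqI)
    show "x + y \<in> g ` H" if xy: "x \<in> g ` H" "y \<in> g ` H" for x y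
    proof -
      obtain a b where "a \<in> H" "b \<in> H" "x = g a" "y = g b" using xy by blast
      moreover have "a + b \<in> H" using calculation HS unfolding A.subspace_def by blast
      ultimately show ?thesis using gadd by (metis image_eqI)
    qed
    show "s2 c x \<in> g ` H" if xx: "x \<in> g ` H" for c x
    proof -
      obtain a where "a \<in> H" "x = g a" using xx by blast
      moreover have "s1 c a \<in> H" using calculation HS unfolding A.subspace_def by blast
      ultimately show ?thesis using gsc by (metis image_eqI)
    qed
  qed
  obtain Bs where Bs: "finite Bs" "Bs \<subseteq> H" "A.span Bs = H" using HF unfolding fin_dim_sub_def by blast
  have "g ` H \<subseteq> B.span (g ` Bs)"
  proof
    fix y assume "y \<in> g ` H"
    then obtain f where f: "f \<in> A.span Bs" "y = g f" using Bs by auto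
    have "f \<in> H \<and> g f \<in> B.span (g ` Bs)" using f(1)
    proof (induction rule: A.span_induct_alt)
      case base then show ?case using h0 g0 B.span_zero by simp
    next
      case (step c x y)
      have xH: "x \<in> H" using step Bs by blast
      have cx: "s1 c x \<in> H" using xH HS unfolding A.subspace_def by blast
      have "s1 c x + y \<in> H" using cx step HS unfolding A.subspace_def by blast
      moreover have "g (s1 c x + y) = s2 c (g x) + g y" using gadd gsc cx xH step by simp
      moreover have "s2 c (g x) + g y \<in> B.span (g ` Bs)"
        using step by (intro B.span_add B.span_scale) (auto intro: B.span_base)
      ultimately show ?case by simp
    qed
    then show "y \<in> B.span (g ` Bs)" using f by simp
  qed
  moreover have "B.span (g ` Bs) \<subseteq> g ` H" using Bs sub by (intro B.span_minimal) auto
  ultimately have "B.span (g ` Bs) = g ` H" by blast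
  moreover have "g ` Bs \<subseteq> g ` H" using Bs by blast
  ultimately show ?thesis using sub Bs(1) unfolding fin_dim_sub_def by (metis finite_imageI)
qed

lemma fin_sum:
  assumes V: "vector_space s"
    and "module.subspace s A" "fin_dim_sub s A" "module.subspace s C" "fin_dim_sub s C"
  shows "module.subspace s {a + b | a b. a \<in> A \<and> b \<in> C} \<and> fin_dim_sub s {a + b | a b. a \<in> A \<and> b \<in> C}"
proof -
  interpret B: vector_space s by fact
  obtain B1 where B1: "finite B1" "B1 \<subseteq> A" "B.span B1 = A" using assms unfolding fin_dim_sub_def by blast
  obtain B2 where B2: "finite B2" "B2 \<subseteq> C" "B.span B2 = C" using assms unfolding fin_dim_sub_def by blast
  have e: "B.span (B1 \<union> B2) = {a + b | a b. a \<in> A \<and> b \<in> C}" using B1 B2 B.span_Un by simp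
  have "B1 \<union> B2 \<subseteq> B.span (B1 \<union> B2)" by (rule B.span_superset)
  then show ?thesis using e B1 B2 unfolding fin_dim_sub_def
    by (metis B.subspace_span finite_UnI)
qed


lemma left_main:
  assumes VS: "vector_space sm"
    and HS: "\<forall>x\<in>Ob. \<forall>y\<in>Ob. module.subspace sm (Hom x y)"
    and HF: "\<forall>x\<in>Ob. \<forall>y\<in>Ob. fin_dim_sub sm (Hom x y)"
    and HC: "\<forall>x\<in>Ob. \<forall>y\<in>Ob. \<forall>z\<in>Ob. \<forall>f\<in>Hom x y. \<forall>g\<in>Hom y z. cmp x y z g f \<in> Hom x z"
    and HI: "\<forall>x\<in>Ob. idm x \<in> Hom x x"
    and LM: "left_module sm Ob Hom cmp idm sv V act"
  shows "directed_union Ob V {N. left_submodule Ob Hom sv V act N \<and> locally_finite_mod Ob sv N}"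
proof -
  interpret K: vector_space sm by fact
  have WV: "vector_space sv" by (rule LM[unfolded left_module_def, THEN conjunct1])
  interpret W: vector_space sv by fact
  have Vs: "\<forall>x\<in>Ob. W.subspace (V x)" by (rule LM[unfolded left_module_def, THEN conjunct2, THEN conjunct1])
  have Vact: "\<forall>x\<in>Ob. \<forall>y\<in>Ob. \<forall>f\<in>Hom x y. \<forall>v\<in>V x. act x y f v \<in> V y"
    by (rule LM[unfolded left_module_def, THEN conjunct2, THEN conjunct2, THEN conjunct1])
  have Vlin: "\<forall>x\<in>Ob. \<forall>y\<in>Ob. \<forall>f\<in>Hom x y. \<forall>f'\<in>Hom x y. \<forall>u\<in>V x. \<forall>v\<in>V x. \<forall>c.
        act x y f (u + v) = act x y f u + act x y f v \<and>
        act x y f (sv c v) = sv c (act x y f v) \<and>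
        act x y (f + f') v = act x y f v + act x y f' v \<and>
        act x y (sm c f) v = sv c (act x y f v)"
    by (rule LM[unfolded left_module_def, THEN conjunct2, THEN conjunct2, THEN conjunct2, THEN conjunct1])
  have Vid: "\<forall>x\<in>Ob. \<forall>v\<in>V x. act x x (idm x) v = v" by (rule LM[unfolded left_module_def, THEN conjunct2, THEN conjunct2, THEN conjunct2, THEN conjunct2, THEN conjunct1])
  have Vcmp: "\<forall>x\<in>Ob. \<forall>y\<in>Ob. \<forall>z\<in>Ob. \<forall>f\<in>Hom x y. \<forall>g\<in>Hom y z. \<forall>v\<in>V x.
        act x z (cmp x y z g f) v = act y z g (act x y f v)" by (rule LM[unfolded left_module_def, THEN conjunct2, THEN conjunct2, THEN conjunct2, THEN conjunct2, THEN conjunct2])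
  define S where "S = {N. left_submodule Ob Hom sv V act N \<and> locally_finite_mod Ob sv N}"
  have La: "act x y f (u + v) = act x y f u + act x y f v"
    if "x \<in> Ob" "y \<in> Ob" "f \<in> Hom x y" "u \<in> V x" "v \<in> V x" for x y f u v
    by (rule Vlin[rule_format, OF that(1-3) that(3) that(4-5), THEN conjunct1])
  have Lf: "act x y (f + f') v = act x y f v + act x y f' v"
    if "x \<in> Ob" "y \<in> Ob" "f \<in> Hom x y" "f' \<in> Hom x y" "v \<in> V x" for x y f f' v
    by (rule Vlin[rule_format, OF that(1-4) that(5) that(5), THEN conjunct2, THEN conjunct2, THEN conjunct1])
  have Ls: "act x y (sm c f) v = sv c (act x y f v)"
    if "x \<in> Ob" "y \<in> Ob" "f \<in> Hom x y" "v \<in> V x" for x y f v c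
    by (rule Vlin[rule_format, OF that(1-3) that(3) that(4) that(4), THEN conjunct2, THEN conjunct2, THEN conjunct2])
  have act0: "act x y f 0 = 0" if "x \<in> Ob" "y \<in> Ob" "f \<in> Hom x y" for x y f
  proof -
    have "0 \<in> V x" using Vs that W.subspace_0 by blast
    then have "act x y f (0 + 0) = act x y f 0 + act x y f 0" using La that by blast
    then show ?thesis by simp
  qed
  have Z: "(\<lambda>x. {0}) \<in> S"
  proof -
    have "left_submodule Ob Hom sv V act (\<lambda>x. {0})"
      unfolding left_submodule_def
    proof (intro conjI)
      show "\<forall>x\<in>Ob. {0} \<subseteq> V x \<and> W.subspace {0}" using Vs W.subspace_0 by auto
      show "\<forall>x\<in>Ob. \<forall>y\<in>Ob. \<forall>f\<in>Hom x y. \<forall>v\<in>{0}. act x y f v \<in> {0}" using act0 by simp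
    qed
    moreover have "locally_finite_mod Ob sv (\<lambda>x. {0})"
      unfolding locally_finite_mod_def fin_dim_sub_def
      by (intro ballI exI[of _ "{}"]) simp
    ultimately show ?thesis unfolding S_def by blast
  qed
  have D: "\<exists>N3\<in>S. \<forall>x\<in>Ob. N1 x \<subseteq> N3 x \<and> N2 x \<subseteq> N3 x" if "N1 \<in> S" "N2 \<in> S" for N1 N2
  proof -
    define N3 where "N3 x = {a + b | a b. a \<in> N1 x \<and> b \<in> N2 x}" for x
    have N1: "\<forall>x\<in>Ob. N1 x \<subseteq> V x \<and> W.subspace (N1 x)" "\<forall>x\<in>Ob. \<forall>y\<in>Ob. \<forall>f\<in>Hom x y. \<forall>v\<in>N1 x. act x y f v \<in> N1 y"
      "\<forall>x\<in>Ob. fin_dim_sub sv (N1 x)"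
      using that unfolding S_def left_submodule_def locally_finite_mod_def by blast+
    have N2: "\<forall>x\<in>Ob. N2 x \<subseteq> V x \<and> W.subspace (N2 x)" "\<forall>x\<in>Ob. \<forall>y\<in>Ob. \<forall>f\<in>Hom x y. \<forall>v\<in>N2 x. act x y f v \<in> N2 y"
      "\<forall>x\<in>Ob. fin_dim_sub sv (N2 x)"
      using that unfolding S_def left_submodule_def locally_finite_mod_def by blast+
    have fs: "\<forall>x\<in>Ob. W.subspace (N3 x) \<and> fin_dim_sub sv (N3 x)"
      unfolding N3_def using fin_sum[OF WV] N1 N2 by blast
    have sub: "\<forall>x\<in>Ob. N3 x \<subseteq> V x"
      unfolding N3_def using N1(1) N2(1) Vs unfolding W.subspace_def by blast
    have cl: "\<forall>x\<in>Ob. \<forall>y\<in>Ob. \<forall>f\<in>Hom x y. \<forall>v\<in>N3 x. act x y f v \<in> N3 y"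
    proof (intro ballI)
      fix x y f v assume a: "x \<in> Ob" "y \<in> Ob" "f \<in> Hom x y" "v \<in> N3 x"
      then obtain p q where pq: "v = p + q" "p \<in> N1 x" "q \<in> N2 x" unfolding N3_def by blast
      have "act x y f v = act x y f p + act x y f q" using pq a La N1(1) N2(1) by blast
      then show "act x y f v \<in> N3 y" unfolding N3_def using pq a N1(2) N2(2) by blast
    qed
    have "N3 \<in> S" unfolding S_def left_submodule_def locally_finite_mod_def using fs sub cl by blast
    moreover have "\<forall>x\<in>Ob. N1 x \<subseteq> N3 x \<and> N2 x \<subseteq> N3 x"
      unfolding N3_def using N1(1) N2(1) W.subspace_0 by (auto; metis add_0 add.right_neutral)
    ultimately show ?thesis by blast
  qed
  have U: "V x = (\<Union>N\<in>S. N x)" if x: "x \<in> Ob" for x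
  proof
    show "(\<Union>N\<in>S. N x) \<subseteq> V x" using x unfolding S_def left_submodule_def by blast
    show "V x \<subseteq> (\<Union>N\<in>S. N x)"
    proof
      fix v assume v: "v \<in> V x"
      define N where "N y = (\<lambda>f. act x y f v) ` Hom x y" for y
      have fs: "\<forall>y\<in>Ob. W.subspace (N y) \<and> fin_dim_sub sv (N y)"
      proof
        fix y assume y: "y \<in> Ob"
        show "W.subspace (N y) \<and> fin_dim_sub sv (N y)" unfolding N_def
          apply (rule fin_image[OF VS WV])
          using HS HF x y v Lf Ls by blast+
      qed
      have sub: "\<forall>y\<in>Ob. N y \<subseteq> V y" unfolding N_def using Vact x v by blast
      have cl: "\<forall>y\<in>Ob. \<forall>z\<in>Ob. \<forall>g\<in>Hom y z. \<forall>w\<in>N y. act y z g w \<in> N z"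
      proof (intro ballI)
        fix y z g w assume a: "y \<in> Ob" "z \<in> Ob" "g \<in> Hom y z" "w \<in> N y"
        then obtain f where f: "f \<in> Hom x y" "w = act x y f v" unfolding N_def by blast
        have "act y z g w = act x z (cmp x y z g f) v" using Vcmp a f x v by simp
        then show "act y z g w \<in> N z" unfolding N_def using HC a f x by blast
      qed
      have "N \<in> S" unfolding S_def left_submodule_def locally_finite_mod_def using fs sub cl by blast
      moreover have "v \<in> N x" unfolding N_def using HI Vid x v by (metis image_eqI)
      ultimately show "v \<in> (\<Union>N\<in>S. N x)" by blast
    qed
  qed
  have "directed_union Ob V S"
    unfolding directed_union_def
  proof (intro conjI)
    show "S \<noteq> {}" using Z by blast
    show "\<forall>N1\<in>S. \<forall>N2\<in>S. \<exists>N3\<in>S. \<forall>x\<in>Ob. N1 x \<subseteq> N3 x \<and> N2 x \<subseteq> N3 x" using D by blast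
    show "\<forall>x\<in>Ob. V x = (\<Union>N\<in>S. N x)" using U by blast
  qed
  then show ?thesis unfolding S_def .
qed


theorem lemma6p6:
  fixes sm :: "'k::field \<Rightarrow> 'm::ab_group_add \<Rightarrow> 'm"
    and Ob :: "'o set"
    and Hom :: "'o \<Rightarrow> 'o \<Rightarrow> 'm set"
    and cmp :: "'o \<Rightarrow> 'o \<Rightarrow> 'o \<Rightarrow> 'm \<Rightarrow> 'm \<Rightarrow> 'm"
    and idm :: "'o \<Rightarrow> 'm"
  assumes "locally_finite_kcat sm Ob Hom cmp idm"
  shows "(\<forall>(sv :: 'k \<Rightarrow> 'v::ab_group_add \<Rightarrow> 'v) V act.
            left_module sm Ob Hom cmp idm sv V act \<longrightarrow>
            directed_union Ob V
              {N. left_submodule Ob Hom sv V act N \<and> locally_finite_mod Ob sv N})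
       \<and> (\<forall>(sv :: 'k \<Rightarrow> 'v \<Rightarrow> 'v) V act.
            right_module sm Ob Hom cmp idm sv V act \<longrightarrow>
            directed_union Ob V
              {N. right_submodule Ob Hom sv V act N \<and> locally_finite_mod Ob sv N})"
proof -
  have K: "kcat sm Ob Hom cmp idm" and HF: "\<forall>x\<in>Ob. \<forall>y\<in>Ob. fin_dim_sub sm (Hom x y)"
    using assms unfolding locally_finite_kcat_def by blast+
  have VS: "vector_space sm" and HS: "\<forall>x\<in>Ob. \<forall>y\<in>Ob. module.subspace sm (Hom x y)"
    and HC: "\<forall>x\<in>Ob. \<forall>y\<in>Ob. \<forall>z\<in>Ob. \<forall>f\<in>Hom x y. \<forall>g\<in>Hom y z. cmp x y z g f \<in> Hom x z"
    and HI: "\<forall>x\<in>Ob. idm x \<in> Hom x x"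
  proof -
    note K' = K[unfolded kcat_def]
    show "vector_space sm" by (rule K'[THEN conjunct1])
    show "\<forall>x\<in>Ob. \<forall>y\<in>Ob. module.subspace sm (Hom x y)" by (rule K'[THEN conjunct2, THEN conjunct1])
    show "\<forall>x\<in>Ob. \<forall>y\<in>Ob. \<forall>z\<in>Ob. \<forall>f\<in>Hom x y. \<forall>g\<in>Hom y z. cmp x y z g f \<in> Hom x z"
      by (rule K'[THEN conjunct2, THEN conjunct2, THEN conjunct1])
    have "\<forall>x\<in>Ob. idm x \<in> Hom x x \<and> idm x \<noteq> 0"
      by (rule K'[THEN conjunct2, THEN conjunct2, THEN conjunct2, THEN conjunct2, THEN conjunct2, THEN conjunct1])
    then show "\<forall>x\<in>Ob. idm x \<in> Hom x x" by blast
  qed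
  show ?thesis
  proof (intro conjI allI impI)
    fix sv :: "'k \<Rightarrow> 'v \<Rightarrow> 'v" and V act
    assume "left_module sm Ob Hom cmp idm sv V act"
    then show "directed_union Ob V {N. left_submodule Ob Hom sv V act N \<and> locally_finite_mod Ob sv N}"
      using left_main[OF VS HS HF HC HI] by blast
  next
    fix sv :: "'k \<Rightarrow> 'v \<Rightarrow> 'v" and V act
    assume R: "right_module sm Ob Hom cmp idm sv V act"
    define Hom' where "Hom' x y = Hom y x" for x y
    define cmp' where "cmp' x y z g f = cmp z y x f g" for x y z g f
    define act' where "act' x y f v = act y x f v" for x y f v
    have HS': "\<forall>x\<in>Ob. \<forall>y\<in>Ob. module.subspace sm (Hom' x y)" using HS unfolding Hom'_def by blast
    have HF': "\<forall>x\<in>Ob. \<forall>y\<in>Ob. fin_dim_sub sm (Hom' x y)" using HF unfolding Hom'_def by blast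
    have HC': "\<forall>x\<in>Ob. \<forall>y\<in>Ob. \<forall>z\<in>Ob. \<forall>f\<in>Hom' x y. \<forall>g\<in>Hom' y z. cmp' x y z g f \<in> Hom' x z"
      using HC unfolding Hom'_def cmp'_def by blast
    have HI': "\<forall>x\<in>Ob. idm x \<in> Hom' x x" using HI unfolding Hom'_def by blast
    have R1: "vector_space sv" and R2: "\<forall>x\<in>Ob. module.subspace sv (V x)"
      and R3: "\<forall>x\<in>Ob. \<forall>y\<in>Ob. \<forall>f\<in>Hom x y. \<forall>v\<in>V y. act x y f v \<in> V x"
      and R4: "\<forall>x\<in>Ob. \<forall>y\<in>Ob. \<forall>f\<in>Hom x y. \<forall>f'\<in>Hom x y. \<forall>u\<in>V y. \<forall>v\<in>V y. \<forall>c.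
        act x y f (u + v) = act x y f u + act x y f v \<and>
        act x y f (sv c v) = sv c (act x y f v) \<and>
        act x y (f + f') v = act x y f v + act x y f' v \<and>
        act x y (sm c f) v = sv c (act x y f v)"
      and R5: "\<forall>x\<in>Ob. \<forall>v\<in>V x. act x x (idm x) v = v"
      and R6: "\<forall>x\<in>Ob. \<forall>y\<in>Ob. \<forall>z\<in>Ob. \<forall>f\<in>Hom x y. \<forall>g\<in>Hom y z. \<forall>v\<in>V z.
        act x z (cmp x y z g f) v = act x y f (act y z g v)"
    proof -
      note R' = R[unfolded right_module_def]
      show "vector_space sv" by (rule R'[THEN conjunct1])
      show "\<forall>x\<in>Ob. module.subspace sv (V x)" by (rule R'[THEN conjunct2, THEN conjunct1])
      show "\<forall>x\<in>Ob. \<forall>y\<in>Ob. \<forall>f\<in>Hom x y. \<forall>v\<in>V y. act x y f v \<in> V x" by (rule R'[THEN conjunct2, THEN conjunct2, THEN conjunct1])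
      show "\<forall>x\<in>Ob. \<forall>y\<in>Ob. \<forall>f\<in>Hom x y. \<forall>f'\<in>Hom x y. \<forall>u\<in>V y. \<forall>v\<in>V y. \<forall>c.
        act x y f (u + v) = act x y f u + act x y f v \<and>
        act x y f (sv c v) = sv c (act x y f v) \<and>
        act x y (f + f') v = act x y f v + act x y f' v \<and>
        act x y (sm c f) v = sv c (act x y f v)" by (rule R'[THEN conjunct2, THEN conjunct2, THEN conjunct2, THEN conjunct1])
      show "\<forall>x\<in>Ob. \<forall>v\<in>V x. act x x (idm x) v = v" by (rule R'[THEN conjunct2, THEN conjunct2, THEN conjunct2, THEN conjunct2, THEN conjunct1])
      show "\<forall>x\<in>Ob. \<forall>y\<in>Ob. \<forall>z\<in>Ob. \<forall>f\<in>Hom x y. \<forall>g\<in>Hom y z. \<forall>v\<in>V z.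
        act x z (cmp x y z g f) v = act x y f (act y z g v)" by (rule R'[THEN conjunct2, THEN conjunct2, THEN conjunct2, THEN conjunct2, THEN conjunct2])
    qed
    have L: "left_module sm Ob Hom' cmp' idm sv V act'"
      unfolding left_module_def
    proof (intro conjI)
      show "vector_space sv" by (rule R1)
      show "\<forall>x\<in>Ob. module.subspace sv (V x)" by (rule R2)
      show "\<forall>x\<in>Ob. \<forall>y\<in>Ob. \<forall>f\<in>Hom' x y. \<forall>v\<in>V x. act' x y f v \<in> V y"
        unfolding Hom'_def act'_def using R3 by simp
      show "\<forall>x\<in>Ob. \<forall>y\<in>Ob. \<forall>f\<in>Hom' x y. \<forall>f'\<in>Hom' x y. \<forall>u\<in>V x. \<forall>v\<in>V x. \<forall>c.
        act' x y f (u + v) = act' x y f u + act' x y f v \<and>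
        act' x y f (sv c v) = sv c (act' x y f v) \<and>
        act' x y (f + f') v = act' x y f v + act' x y f' v \<and>
        act' x y (sm c f) v = sv c (act' x y f v)"
        unfolding Hom'_def act'_def using R4 by simp
      show "\<forall>x\<in>Ob. \<forall>v\<in>V x. act' x x (idm x) v = v" unfolding act'_def by (rule R5)
      show "\<forall>x\<in>Ob. \<forall>y\<in>Ob. \<forall>z\<in>Ob. \<forall>f\<in>Hom' x y. \<forall>g\<in>Hom' y z. \<forall>v\<in>V x.
        act' x z (cmp' x y z g f) v = act' y z g (act' x y f v)"
        unfolding Hom'_def act'_def cmp'_def using R6 by simp
    qed
    have E: "right_submodule Ob Hom sv V act N = left_submodule Ob Hom' sv V act' N" for N
      unfolding right_submodule_def left_submodule_def Hom'_def act'_def by blast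
    show "directed_union Ob V {N. right_submodule Ob Hom sv V act N \<and> locally_finite_mod Ob sv N}"
      using left_main[OF VS HS' HF' HC' HI' L] unfolding E by blast
  qed
qed

end
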